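(* Let $G$ be any graph on $n$ vertices. For each edge $e\in E(G)$ let $c(e)$ denote the largest $r$ such that $e$ is an edge of a subgraph of $G$ isomorphic to $K_r$ (so $c(e)\ge 2$). Then \[ \sum_{e\in E(G)} \frac{c(e)}{c(e)-1} \le \frac{n^2}{2}, \] and equality holds if and only if $G$ is a complete multipartite graph with at least two parts, all parts having the same size.
   Context: $K_r$ denotes the complete graph on $r$ vertices. Graphs are finite and simple. *)

theory Defs
  imports Complex_Main "HOL-Library.Disjoint_Sets"
begin

definition simple_graph :: "'a set \<Rightarrow> 'a set set \<Rightarrow> bool" where
  "simple_graph V E \<longleftrightarrow> finite V \<and> (\<forall>e\<in>E. e \<subseteq> V \<and> card e = 2)"

definition is_clique :: "'a set \<Rightarrow> 'a set set \<Rightarrow> 'a set \<Rightarrow> bool" where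
  "is_clique V E K \<longleftrightarrow> K \<subseteq> V \<and> (\<forall>u\<in>K. \<forall>v\<in>K. u \<noteq> v \<longrightarrow> {u, v} \<in> E)"

definition edge_clique_num :: "'a set \<Rightarrow> 'a set set \<Rightarrow> 'a set \<Rightarrow> nat" where
  "edge_clique_num V E e = Max {card K | K. is_clique V E K \<and> e \<subseteq> K}"

definition balanced_complete_multipartite :: "'a set \<Rightarrow> 'a set set \<Rightarrow> bool" where
  "balanced_complete_multipartite V E \<longleftrightarrow>
    (\<exists>P. partition_on V P \<and> card P \<ge> 2 \<and> (\<forall>A\<in>P. \<forall>B\<in>P. card A = card B) \<and>
         (\<forall>u\<in>V. \<forall>v\<in>V. {u, v} \<in> E \<longleftrightarrow> (u \<noteq> v \<and> \<not> (\<exists>A\<in>P. u \<in> A \<and> v \<in> A))))"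

end

theory Submission imports Defs begin

lemma sg_finite: "simple_graph V E \<Longrightarrow> finite V"
  by (simp add: simple_graph_def)

lemma sg_edge: "simple_graph V E \<Longrightarrow> e \<in> E \<Longrightarrow> \<exists>u v. u \<noteq> v \<and> e = {u,v} \<and> u \<in> V \<and> v \<in> V"
  unfolding simple_graph_def by (metis card_2_iff insert_subset)

lemma sg_finE: "simple_graph V E \<Longrightarrow> finite E"
proof -
  assume a: "simple_graph V E"
  hence "E \<subseteq> Pow V" by (auto simp: simple_graph_def)
  thus ?thesis using a by (meson finite_Pow_iff finite_subset sg_finite)
qed

lemma sg_no_loop: "simple_graph V E \<Longrightarrow> {u,u} \<notin> E"
  unfolding simple_graph_def by fastforce

lemma clique_sub: "is_clique V E K \<Longrightarrow> K \<subseteq> V" by (simp add: is_clique_def)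
lemma clique_adj: "is_clique V E K \<Longrightarrow> x \<in> K \<Longrightarrow> y \<in> K \<Longrightarrow> x \<noteq> y \<Longrightarrow> {x,y} \<in> E"
  by (simp add: is_clique_def)

lemma clique_card_le: "simple_graph V E \<Longrightarrow> is_clique V E K \<Longrightarrow> card K \<le> card V"
  unfolding is_clique_def by (simp add: card_mono sg_finite)

lemma clique_fin: "simple_graph V E \<Longrightarrow> is_clique V E K \<Longrightarrow> finite K"
  unfolding is_clique_def using sg_finite finite_subset by blast

lemma ecn_fin: "simple_graph V E \<Longrightarrow> finite {card K | K. is_clique V E K \<and> e \<subseteq> K}"
proof -
  assume a: "simple_graph V E"
  have "{card K | K. is_clique V E K \<and> e \<subseteq> K} \<subseteq> {0..card V}"
    using clique_card_le[OF a] by auto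
  thus ?thesis using finite_subset by blast
qed

lemma edge_clique: "simple_graph V E \<Longrightarrow> e \<in> E \<Longrightarrow> is_clique V E e"
  apply (drule (1) sg_edge) unfolding is_clique_def by (auto simp: insert_commute)

lemma ecn_ge: "simple_graph V E \<Longrightarrow> is_clique V E K \<Longrightarrow> e \<subseteq> K \<Longrightarrow> card K \<le> edge_clique_num V E e"
  unfolding edge_clique_num_def using ecn_fin by (intro Max_ge) blast+

lemma ecn_attained: "simple_graph V E \<Longrightarrow> e \<in> E \<Longrightarrow> \<exists>K. is_clique V E K \<and> e \<subseteq> K \<and> card K = edge_clique_num V E e"
proof -
  assume a: "simple_graph V E" "e \<in> E"
  have "{card K | K. is_clique V E K \<and> e \<subseteq> K} \<noteq> {}" using edge_clique[OF a] by blast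
  from Max_in[OF ecn_fin[OF a(1)] this] show ?thesis unfolding edge_clique_num_def by auto
qed

lemma ecn_ge2: "simple_graph V E \<Longrightarrow> e \<in> E \<Longrightarrow> edge_clique_num V E e \<ge> 2"
  using ecn_ge[OF _ edge_clique] by (metis order.refl simple_graph_def)

lemma max_clique_ex: "simple_graph V E \<Longrightarrow> \<exists>K. is_clique V E K \<and> (\<forall>K'. is_clique V E K' \<longrightarrow> card K' \<le> card K)"
proof -
  assume a: "simple_graph V E"
  let ?S = "{card K | K. is_clique V E K}"
  have sub: "?S \<subseteq> {0..card V}" using clique_card_le[OF a] by auto
  have f: "finite ?S" by (rule finite_subset[OF sub]) simp
  have "is_clique V E {}" by (simp add: is_clique_def)
  hence "?S \<noteq> {}" by blast
  from Max_in[OF f this] obtain K where "is_clique V E K" "card K = Max ?S" by auto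
  moreover have "\<forall>K'. is_clique V E K' \<longrightarrow> card K' \<le> Max ?S" using Max_ge[OF f] by blast
  ultimately show ?thesis by metis
qed

definition ind :: "'a set set \<Rightarrow> 'a set \<Rightarrow> 'a set set" where
  "ind E W = {e\<in>E. e \<subseteq> W}"

lemma sg_ind: "simple_graph V E \<Longrightarrow> W \<subseteq> V \<Longrightarrow> simple_graph W (ind E W)"
  unfolding simple_graph_def ind_def using finite_subset by auto

lemma clique_ind: "W \<subseteq> V \<Longrightarrow> is_clique W (ind E W) K \<Longrightarrow> is_clique V E K"
  unfolding is_clique_def ind_def by auto

lemma ecn_ind: "simple_graph V E \<Longrightarrow> W \<subseteq> V \<Longrightarrow> e \<in> ind E W \<Longrightarrow>
   edge_clique_num W (ind E W) e \<le> edge_clique_num V E e"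
  by (metis clique_ind ecn_attained ecn_ge sg_ind)

lemma frac_mono: "(x::real) \<ge> 2 \<Longrightarrow> x \<le> y \<Longrightarrow> y/(y-1) \<le> x/(x-1)"
  by (simp add: field_simps)

lemma frac_inj: "(x::real) \<ge> 2 \<Longrightarrow> y \<ge> 2 \<Longrightarrow> y/(y-1) = x/(x-1) \<Longrightarrow> x = y"
  by (simp add: field_simps)


definition w :: "'a set \<Rightarrow> 'a set set \<Rightarrow> 'a set \<Rightarrow> real" where
  "w V E e = real (edge_clique_num V E e) / (real (edge_clique_num V E e) - 1)"

definition S :: "'a set \<Rightarrow> 'a set set \<Rightarrow> real" where
  "S V E = (\<Sum>e\<in>E. w V E e)"

lemma vertex_bound:
  assumes sg: "simple_graph V E" and Kc: "is_clique V E K"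
    and Kmax: "\<forall>K'. is_clique V E K' \<longrightarrow> card K' \<le> card K"
    and v: "v \<in> V" "v \<notin> K" and r1: "card K \<ge> 1"
  shows "(\<Sum>k\<in>{k\<in>K. {v,k}\<in>E}. w V E {v,k}) \<le> card K \<and>
         ((\<Sum>k\<in>{k\<in>K. {v,k}\<in>E}. w V E {v,k}) = card K \<longrightarrow> card {k\<in>K. {v,k}\<in>E} = card K - 1)"
proof -
  define N where "N = {k\<in>K. {v,k}\<in>E}"
  define d where "d = card N"
  have finK: "finite K" using clique_fin[OF sg Kc] .
  have finN: "finite N" using finK N_def by simp
  have C: "is_clique V E (insert v N)"
    using Kc v unfolding is_clique_def N_def by (auto simp: insert_commute)
  have cC: "card (insert v N) = d + 1" using v finN by (simp add: d_def N_def)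
  have dle: "d + 1 \<le> card K" using Kmax C cC by metis
  have each: "w V E {v,k} \<le> real (d+1) / real d" if k: "k \<in> N" and d1: "d \<ge> 1" for k
  proof -
    have "d + 1 \<le> edge_clique_num V E {v,k}"
      using ecn_ge[OF sg C, of "{v,k}"] k cC by auto
    thus ?thesis unfolding w_def using frac_mono[of "real (d+1)" "real (edge_clique_num V E {v,k})"] d1
      by simp
  qed
  show ?thesis
  proof (cases "d = 0")
    case True
    hence "N = {}" using finN d_def by simp
    thus ?thesis using r1 unfolding N_def[symmetric] by simp
  next
    case False
    have "(\<Sum>k\<in>N. w V E {v,k}) \<le> (\<Sum>k\<in>N. real (d+1) / real d)"
      using each False by (intro sum_mono) auto
    also have "\<dots> = real (d+1)" using False by (simp add: d_def)
    finally have le: "(\<Sum>k\<in>N. w V E {v,k}) \<le> real (d+1)" .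
    have dle': "real (d+1) \<le> real (card K)" using dle by linarith
    have A: "(\<Sum>k\<in>N. w V E {v,k}) \<le> real (card K)" using le dle' by linarith
    have B: "d = card K - 1" if "(\<Sum>k\<in>N. w V E {v,k}) = real (card K)"
    proof -
      have "real (card K) \<le> real (d+1)" using le that by linarith
      hence "card K \<le> d + 1" by linarith
      thus ?thesis using dle by linarith
    qed
    show ?thesis using A B unfolding N_def[symmetric] d_def[symmetric] by blast
  qed
qed

lemma partK:
  assumes sg: "simple_graph V E" and Kc: "is_clique V E K"
    and Kmax: "\<forall>K'. is_clique V E K' \<longrightarrow> card K' \<le> card K"
  shows "(\<Sum>e\<in>{e\<in>E. e \<subseteq> K}. w V E e) = (if card K \<ge> 2 then real (card K)^2/2 else 0)"
proof -
  have finK: "finite K" using clique_fin[OF sg Kc] .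
  have eqs: "{e\<in>E. e \<subseteq> K} = {e. e \<subseteq> K \<and> card e = 2}"
  proof
    show "{e\<in>E. e \<subseteq> K} \<subseteq> {e. e \<subseteq> K \<and> card e = 2}" using sg by (auto simp: simple_graph_def)
    show "{e. e \<subseteq> K \<and> card e = 2} \<subseteq> {e\<in>E. e \<subseteq> K}"
      using Kc unfolding is_clique_def by (auto simp: card_2_iff)
  qed
  have val: "w V E e = real (card K) / (real (card K) - 1)" if "e \<in> {e\<in>E. e \<subseteq> K}" for e
  proof -
    have "card K \<le> edge_clique_num V E e" using ecn_ge[OF sg Kc] that by auto
    moreover have "edge_clique_num V E e \<le> card K" using ecn_attained[OF sg] Kmax that by fastforce
    ultimately show ?thesis unfolding w_def by simp
  qed
  have "(\<Sum>e\<in>{e\<in>E. e \<subseteq> K}. w V E e) = real (card {e. e \<subseteq> K \<and> card e = 2}) * (real (card K) / (real (card K) - 1))"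
    using val eqs by simp
  also have "card {e. e \<subseteq> K \<and> card e = 2} = card K choose 2" using n_subsets[OF finK] by simp
  finally have s: "(\<Sum>e\<in>{e\<in>E. e \<subseteq> K}. w V E e) = real (card K choose 2) * (real (card K) / (real (card K) - 1))" .
  have ev: "even (card K * (card K - 1))" by (cases "card K") auto
  have c2: "2 * (card K choose 2) = card K * (card K - 1)"
    using ev by (simp add: choose_two)
  hence c2r: "2 * real (card K choose 2) = real (card K) * (real (card K) - 1)" if "card K \<ge> 1"
    using that by (metis of_nat_1 of_nat_diff of_nat_mult of_nat_numeral)
  show ?thesis
  proof (cases "card K \<ge> 2")
    case True
    define r where "r = real (card K)"
    define C where "C = real (card K choose 2)"
    have r1: "r - 1 > 0" using True r_def by simp
    have "2 * C = r * (r - 1)" using c2r True unfolding r_def C_def by simp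
    hence e2: "C * 2 = r*r - r" by (simp add: algebra_simps)
    have "C * (r / (r - 1)) = (C*2) * r / (2*(r-1))" using r1 by (simp add: field_simps)
    also have "\<dots> = (r*r - r)*r/(2*(r-1))" using e2 by simp
    also have "(r*r - r)*r = r^2*(r-1)" by (simp add: algebra_simps power2_eq_square)
    also have "r^2*(r-1)/(2*(r-1)) = r^2/2" using r1 by (simp add: field_simps)
    finally have "C * (r / (r - 1)) = r^2 / 2" .
    then show ?thesis using s True unfolding r_def C_def by simp
  next
    case False
    then have "card K choose 2 = 0" by simp
    then show ?thesis using s False by simp
  qed
qed


definition fsel :: "'a set set \<Rightarrow> 'a set \<Rightarrow> 'a \<Rightarrow> 'a" where
  "fsel E K v = the_elem (K - {k\<in>K. {v,k}\<in>E})"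

definition repr :: "'a set \<Rightarrow> 'a" where
  "repr B = (SOME x. x \<in> B)"

lemma part_uniq: "partition_on W P \<Longrightarrow> A \<in> P \<Longrightarrow> B \<in> P \<Longrightarrow> x \<in> A \<Longrightarrow> x \<in> B \<Longrightarrow> A = B"
  unfolding partition_on_def pairwise_def disjnt_def by blast

lemma repr_in: "partition_on W P \<Longrightarrow> B \<in> P \<Longrightarrow> repr B \<in> B"
  unfolding repr_def partition_on_def by (metis ex_in_conv someI_ex)

lemma part_ex: "partition_on W P \<Longrightarrow> x \<in> W \<Longrightarrow> \<exists>A\<in>P. x \<in> A"
  unfolding partition_on_def by blast

lemma part_sub: "partition_on W P \<Longrightarrow> A \<in> P \<Longrightarrow> A \<subseteq> W"
  unfolding partition_on_def by blast

locale SL =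
  fixes V :: "'a set" and E K
  assumes sg: "simple_graph V E" and Kc: "is_clique V E K"
    and Kmax: "\<forall>K'. is_clique V E K' \<longrightarrow> card K' \<le> card K"
    and r2: "card K \<ge> 2"
    and dv: "\<forall>v\<in>V-K. card {k\<in>K. {v,k}\<in>E} = card K - 1"
begin

lemma KV: "K \<subseteq> V" using clique_sub[OF Kc] .
lemma finV: "finite V" using sg_finite[OF sg] .
lemma finK: "finite K" using finV KV finite_subset by blast

lemma fprop: assumes v: "v \<in> V - K"
  shows "fsel E K v \<in> K \<and> {v, fsel E K v} \<notin> E \<and> (\<forall>k\<in>K. k \<noteq> fsel E K v \<longrightarrow> {v,k} \<in> E)"
proof -
  have "card (K - {k\<in>K. {v,k}\<in>E}) = 1"
    using dv v r2 finK by (subst card_Diff_subset) auto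
  then obtain a where a: "K - {k\<in>K. {v,k}\<in>E} = {a}" using card_1_singletonE by blast
  hence "fsel E K v = a" unfolding fsel_def by simp
  thus ?thesis using a by blast
qed

lemma adjK: "u \<in> K \<Longrightarrow> v \<in> K \<Longrightarrow> {u,v} \<in> E \<longleftrightarrow> u \<noteq> v"
  using Kc sg_no_loop[OF sg] unfolding is_clique_def by blast

lemma claim1: assumes u: "u \<in> V - K" and v: "v \<in> V - K" and uv: "u \<noteq> v" "{u,v} \<in> E"
  shows "fsel E K u \<noteq> fsel E K v"
proof
  assume eq: "fsel E K u = fsel E K v"
  define k0 where "k0 = fsel E K u"
  have k0: "k0 \<in> K" using fprop[OF u] k0_def by simp
  define C where "C = insert u (insert v (K - {k0}))"
  have "is_clique V E C"
    unfolding is_clique_def C_def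
  proof (intro conjI ballI impI)
    show "insert u (insert v (K - {k0})) \<subseteq> V" using u v KV by auto
  next
    fix x y assume x: "x \<in> insert u (insert v (K - {k0}))" and y: "y \<in> insert u (insert v (K - {k0}))"
      and xy: "x \<noteq> y"
    have au: "{u,k} \<in> E" "{k,u} \<in> E" if "k \<in> K - {k0}" for k
      using fprop[OF u] that k0_def by (auto simp: insert_commute)
    have av: "{v,k} \<in> E" "{k,v} \<in> E" if "k \<in> K - {k0}" for k
      using fprop[OF v] that k0_def eq by (auto simp: insert_commute)
    have uv2: "{v,u} \<in> E" using uv by (simp add: insert_commute)
    have kk: "{a,b} \<in> E" if "a \<in> K" "b \<in> K" "a \<noteq> b" for a b using clique_adj[OF Kc] that by blast
    show "{x,y} \<in> E" using x y xy au av uv uv2 kk by blast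
  qed
  moreover have "card C = card K + 1"
    using u v uv k0 finK unfolding C_def by (simp add: card_Diff_singleton) (use r2 in linarith)
  ultimately show False using Kmax by fastforce
qed

end

locale SL2 = SL +
  fixes P' :: "'a set set"
  assumes ceq: "\<forall>e\<in>ind E (V-K). edge_clique_num V E e = edge_clique_num (V-K) (ind E (V-K)) e"
    and PW: "partition_on (V-K) P'" and P2: "card P' \<ge> 2"
    and adj': "\<forall>u\<in>V-K. \<forall>v\<in>V-K. {u,v} \<in> ind E (V-K) \<longleftrightarrow> u \<noteq> v \<and> \<not> (\<exists>A\<in>P'. u \<in> A \<and> v \<in> A)"
begin

lemma finP: "finite P'"
proof -
  have "P' \<subseteq> Pow (V-K)" using part_sub[OF PW] by blast
  thus ?thesis using finV finite_subset by blast
qed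

lemma adjW: "u \<in> V-K \<Longrightarrow> v \<in> V-K \<Longrightarrow> {u,v} \<in> E \<longleftrightarrow> u \<noteq> v \<and> \<not> (\<exists>A\<in>P'. u \<in> A \<and> v \<in> A)"
  using adj' unfolding ind_def by auto

lemma cliqueP: assumes C: "is_clique (V-K) (ind E (V-K)) C" shows "card C \<le> card P'"
proof -
  define p where "p = (\<lambda>y. SOME B. B \<in> P' \<and> y \<in> B)"
  have CW: "C \<subseteq> V-K" using clique_sub[OF C] .
  have pp: "p y \<in> P' \<and> y \<in> p y" if "y \<in> C" for y
    unfolding p_def using part_ex[OF PW] CW that by (metis (no_types, lifting) someI_ex subsetD)
  have "inj_on p C"
  proof (rule inj_onI)
    fix x y assume x: "x \<in> C" and y: "y \<in> C" and e: "p x = p y"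
    show "x = y"
    proof (rule ccontr)
      assume "x \<noteq> y"
      hence "{x,y} \<in> ind E (V-K)" using clique_adj[OF C x y] by blast
      hence "\<not> (\<exists>A\<in>P'. x \<in> A \<and> y \<in> A)" using adj' CW x y by blast
      thus False using pp[OF x] pp[OF y] e by metis
    qed
  qed
  moreover have "p ` C \<subseteq> P'" using pp by blast
  ultimately show ?thesis using card_inj_on_le finP by blast
qed

lemma ecnP: assumes e: "e \<in> ind E (V-K)" shows "edge_clique_num V E e \<le> card P'"
proof -
  have sg': "simple_graph (V-K) (ind E (V-K))" using sg_ind[OF sg] by blast
  obtain C where "is_clique (V-K) (ind E (V-K)) C" "card C = edge_clique_num (V-K) (ind E (V-K)) e"
    using ecn_attained[OF sg' e] by blast
  thus ?thesis using cliqueP ceq e by fastforce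
qed

lemma key: assumes A: "A \<in> P'" and u: "u \<in> A"
  shows "fsel E K ` (insert u (repr ` (P' - {A}))) = K \<and> inj_on (fsel E K) (insert u (repr ` (P' - {A})))
    \<and> u \<notin> repr ` (P' - {A})"
proof -
  define R where "R = repr ` (P' - {A})"
  define Q where "Q = insert u R"
  define f where "f = fsel E K"
  have uW: "u \<in> V - K" using part_sub[OF PW A] u by blast
  have RW: "R \<subseteq> V - K" unfolding R_def using repr_in[OF PW] part_sub[OF PW] by blast
  have QW: "Q \<subseteq> V - K" using uW RW Q_def by blast
  have finQ: "finite Q" using QW finV finite_subset by blast
  have uR: "u \<notin> R"
  proof
    assume "u \<in> R"
    then obtain B where B: "B \<in> P' - {A}" "u = repr B" unfolding R_def by blast
    hence "u \<in> B" using repr_in[OF PW] by blast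
    thus False using part_uniq[OF PW A _ u] B by blast
  qed
  have injR: "inj_on repr (P' - {A})"
    by (rule inj_onI) (metis DiffD1 part_uniq[OF PW] repr_in[OF PW])
  have cardQ: "card Q = card P'"
  proof -
    have "card R = card P' - 1" unfolding R_def using card_image[OF injR] A finP by simp
    moreover have "finite R" using finQ Q_def by simp
    ultimately show ?thesis unfolding Q_def using uR P2 by simp
  qed
  have Qpair: "\<not> (\<exists>C\<in>P'. x \<in> C \<and> y \<in> C)" if x: "x \<in> Q" and y: "y \<in> Q" and xy: "x \<noteq> y" for x y
  proof
    assume "\<exists>C\<in>P'. x \<in> C \<and> y \<in> C"
    then obtain C where C: "C \<in> P'" "x \<in> C" "y \<in> C" by blast
    have partof: "\<exists>B\<in>P'. z \<in> B \<and> (z = u \<longrightarrow> B = A) \<and> (z \<noteq> u \<longrightarrow> B \<noteq> A \<and> z = repr B)" if zQ: "z \<in> Q" for z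
    proof (cases "z = u")
      case True thus ?thesis using A u by blast
    next
      case False
      then obtain B where "B \<in> P' - {A}" "z = repr B" using zQ Q_def R_def by blast
      thus ?thesis using False repr_in[OF PW] by blast
    qed
    obtain Bx where Bx: "Bx \<in> P'" "x \<in> Bx" "x = u \<longrightarrow> Bx = A" "x \<noteq> u \<longrightarrow> Bx \<noteq> A \<and> x = repr Bx" using partof[OF x] by blast
    obtain By where By: "By \<in> P'" "y \<in> By" "y = u \<longrightarrow> By = A" "y \<noteq> u \<longrightarrow> By \<noteq> A \<and> y = repr By" using partof[OF y] by blast
    have "Bx = C" using part_uniq[OF PW Bx(1) C(1) Bx(2) C(2)] .
    moreover have "By = C" using part_uniq[OF PW By(1) C(1) By(2) C(3)] .
    ultimately show False using Bx By xy by metis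
  qed
  have Qcl: "is_clique V E Q"
    unfolding is_clique_def using QW adjW Qpair by blast
  have "P' - {A} \<noteq> {}"
  proof
    assume "P' - {A} = {}"
    hence "P' \<subseteq> {A}" by blast
    hence "card P' \<le> card {A}" by (intro card_mono) auto
    hence "card P' \<le> 1" by simp
    thus False using P2 by simp
  qed
  then obtain x where x: "x \<in> R" unfolding R_def by blast
  define e where "e = {u,x}"
  have xu: "x \<noteq> u" using x uR by blast
  have eE: "e \<in> E" unfolding e_def using clique_adj[OF Qcl, of u x] x xu Q_def by blast
  have eind: "e \<in> ind E (V-K)" using eE uW RW x unfolding ind_def e_def by blast
  have ce: "edge_clique_num V E e \<le> card P'" using ecnP[OF eind] .
  define C where "C = Q \<union> (K - f ` Q)"
  have fQK: "f ` Q \<subseteq> K" using fprop QW unfolding f_def by blast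
  have Ccl: "is_clique V E C"
    unfolding is_clique_def C_def
  proof (intro conjI ballI impI)
    show "Q \<union> (K - f ` Q) \<subseteq> V" using QW KV by blast
  next
    fix a b assume a: "a \<in> Q \<union> (K - f ` Q)" and b: "b \<in> Q \<union> (K - f ` Q)" and ab: "a \<noteq> b"
    have cross: "{q,k} \<in> E" "{k,q} \<in> E" if "q \<in> Q" "k \<in> K - f ` Q" for q k
    proof -
      have "k \<noteq> f q" using that by blast
      hence "{q,k} \<in> E" using fprop[of q] that QW unfolding f_def by blast
      thus "{q,k} \<in> E" "{k,q} \<in> E" by (auto simp: insert_commute)
    qed
    have qq: "{a,b} \<in> E" if "a \<in> Q" "b \<in> Q" "a \<noteq> b" for a b using clique_adj[OF Qcl] that by blast
    have kk: "{a,b} \<in> E" if "a \<in> K" "b \<in> K" "a \<noteq> b" for a b using clique_adj[OF Kc] that by blast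
    show "{a,b} \<in> E"
      using a b ab cross qq kk by blast
  qed
  have disj: "Q \<inter> (K - f ` Q) = {}" using QW by blast
  have cardC: "card C = card Q + card (K - f ` Q)"
    unfolding C_def using card_Un_disjoint[OF finQ _ disj] finK by simp
  have eC: "e \<subseteq> C" unfolding e_def C_def Q_def using x by blast
  have "card C \<le> edge_clique_num V E e" using ecn_ge[OF sg Ccl eC] .
  hence "card (K - f ` Q) = 0" using cardC ce cardQ by linarith
  hence "K \<subseteq> f ` Q" using finK by auto
  moreover have "card Q \<le> card K" using Kmax Qcl by blast
  moreover have "card (f ` Q) \<le> card Q" using card_image_le[OF finQ] .
  moreover have "card K \<le> card (f ` Q)" using calculation(1) finQ by (simp add: card_mono)
  ultimately have fQ: "f ` Q = K" and cfQ: "card (f ` Q) = card Q"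
    using fQK by (auto intro: card_subset_eq[OF finK fQK])
  have "inj_on f Q" using eq_card_imp_inj_on[OF finQ cfQ] .
  thus ?thesis using fQ uR unfolding f_def Q_def R_def by blast
qed

lemma claim2: assumes A: "A \<in> P'" and u: "u \<in> A" and v: "v \<in> A"
  shows "fsel E K u = fsel E K v"
proof -
  define R where "R = repr ` (P' - {A})"
  define f where "f = fsel E K"
  have ku: "f ` insert u R = K" "inj_on f (insert u R)" "u \<notin> R" using key[OF A u] unfolding f_def R_def by blast+
  have kv: "f ` insert v R = K" "inj_on f (insert v R)" "v \<notin> R" using key[OF A v] unfolding f_def R_def by blast+
  have "f u \<notin> f ` R" using ku by simp
  moreover have "f v \<notin> f ` R" using kv by simp
  moreover have "f v \<in> insert (f u) (f ` R)" using ku(1) kv(1) by auto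
  ultimately show ?thesis unfolding f_def by simp
qed

lemma fiber: assumes k: "k \<in> K" shows "{v\<in>V-K. fsel E K v = k} \<in> P'"
proof -
  have "P' \<noteq> {}" using P2 by auto
  then obtain A0 where A0: "A0 \<in> P'" by blast
  have "A0 \<noteq> {}" using partition_onD3[OF PW] A0 by metis
  then obtain u0 where u0: "u0 \<in> A0" by blast
  have "k \<in> fsel E K ` (insert u0 (repr ` (P' - {A0})))" using key[OF A0 u0] k by blast
  then obtain u where uQ: "u \<in> insert u0 (repr ` (P' - {A0}))" and fu: "fsel E K u = k" by blast
  have uW: "u \<in> V - K" using uQ part_sub[OF PW A0] u0 repr_in[OF PW] part_sub[OF PW] by blast
  then obtain A where A: "A \<in> P'" "u \<in> A" using part_ex[OF PW] by blast
  have "{v\<in>V-K. fsel E K v = k} = A"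
  proof
    show "A \<subseteq> {v\<in>V-K. fsel E K v = k}" using claim2[OF A(1) A(2)] fu part_sub[OF PW A(1)] by auto
    show "{v\<in>V-K. fsel E K v = k} \<subseteq> A"
    proof
      fix v assume v: "v \<in> {v\<in>V-K. fsel E K v = k}"
      show "v \<in> A"
      proof (rule ccontr)
        assume vA: "v \<notin> A"
        hence "u \<noteq> v" using A by blast
        moreover have "\<not> (\<exists>B\<in>P'. u \<in> B \<and> v \<in> B)" using vA part_uniq[OF PW] A by blast
        ultimately have "{u,v} \<in> E" using adjW uW v by blast
        hence "fsel E K u \<noteq> fsel E K v" using claim1 uW v \<open>u \<noteq> v\<close> by blast
        thus False using fu v by simp
      qed
    qed
  qed
  thus ?thesis using A by simp
qed

end

lemma struct_lemma:
  assumes sg: "simple_graph V E" and Kc: "is_clique V E K"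
    and Kmax: "\<forall>K'. is_clique V E K' \<longrightarrow> card K' \<le> card K"
    and r2: "card K \<ge> 2"
    and dv: "\<forall>v\<in>V-K. card {k\<in>K. {v,k}\<in>E} = card K - 1"
    and ceq: "\<forall>e\<in>ind E (V-K). edge_clique_num V E e = edge_clique_num (V-K) (ind E (V-K)) e"
    and bal: "V - K \<noteq> {} \<longrightarrow> balanced_complete_multipartite (V-K) (ind E (V-K))"
  shows "balanced_complete_multipartite V E"
proof -
  interpret SL V E K using assms by unfold_locales
  define f where "f = fsel E K"
  define g where "g = (\<lambda>x. if x \<in> K then x else f x)"
  define part where "part = (\<lambda>k. insert k {v\<in>V-K. f v = k})"
  define P where "P = part ` K"
  have both: "(\<forall>k\<in>K. \<forall>k'\<in>K. card {v\<in>V-K. f v = k} = card {v\<in>V-K. f v = k'})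
     \<and> (\<forall>u\<in>V-K. \<forall>v\<in>V-K. u \<noteq> v \<longrightarrow> ({u,v} \<in> E \<longleftrightarrow> f u \<noteq> f v))"
  proof (cases "V - K = {}")
    case True
    hence "\<And>k. {v\<in>V-K. f v = k} = {}" by blast
    thus ?thesis using True by (metis DiffI empty_iff)
  next
    case False
    then obtain P' where P': "partition_on (V-K) P'" "card P' \<ge> 2" "\<forall>A\<in>P'. \<forall>B\<in>P'. card A = card B"
      "\<forall>u\<in>V-K. \<forall>v\<in>V-K. {u,v} \<in> ind E (V-K) \<longleftrightarrow> u \<noteq> v \<and> \<not> (\<exists>A\<in>P'. u \<in> A \<and> v \<in> A)"
      using bal unfolding balanced_complete_multipartite_def by blast
    interpret SL2 V E K P' using ceq P' by unfold_locales auto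
    show ?thesis
    proof (intro conjI ballI impI)
      fix k k' assume "k \<in> K" "k' \<in> K"
      thus "card {v\<in>V-K. f v = k} = card {v\<in>V-K. f v = k'}" using fiber P'(3) unfolding f_def by blast
    next
      fix u v assume u: "u \<in> V-K" and v: "v \<in> V-K" and uv: "u \<noteq> v"
      show "{u,v} \<in> E \<longleftrightarrow> f u \<noteq> f v"
      proof
        assume "{u,v} \<in> E" thus "f u \<noteq> f v" using claim1 u v uv unfolding f_def by blast
      next
        assume fne: "f u \<noteq> f v"
        show "{u,v} \<in> E"
        proof (rule ccontr)
          assume "{u,v} \<notin> E"
          then obtain A where "A \<in> P'" "u \<in> A" "v \<in> A" using adjW u v uv by blast
          thus False using claim2 fne unfolding f_def by blast
        qed
      qed
    qed
  qed
  have gK: "g x \<in> K" if "x \<in> V" for x using that fprop unfolding g_def f_def by auto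
  have memP: "x \<in> part k \<longleftrightarrow> g x = k" if "x \<in> V" "k \<in> K" for x k
    using that unfolding part_def g_def by auto
  have partV: "part k \<subseteq> V" if "k \<in> K" for k using that KV unfolding part_def by auto
  have finPart: "finite (part k)" for k unfolding part_def using finV by simp
  have injp: "inj_on part K"
    by (rule inj_onI) (metis memP KV g_def insertI1 part_def subsetD)
  have partition: "partition_on V P"
  proof (rule partition_onI)
    show "\<Union> P = V"
    proof
      show "\<Union> P \<subseteq> V" using partV P_def by blast
      show "V \<subseteq> \<Union> P"
      proof
        fix x assume x: "x \<in> V"
        hence "x \<in> part (g x)" using memP gK by blast
        thus "x \<in> \<Union> P" using gK x P_def by blast
      qed
    qed
  next
    fix p q assume "p \<in> P" "q \<in> P" "p \<noteq> q"
    then obtain k k' where "k \<in> K" "k' \<in> K" "p = part k" "q = part k'" "k \<noteq> k'" unfolding P_def by blast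
    thus "disjnt p q" unfolding disjnt_def using memP partV by blast
  next
    show "{} \<notin> P" unfolding P_def part_def by blast
  qed
  have cardP: "card P = card K" unfolding P_def using card_image[OF injp] .
  have cardpart: "card (part k) = card {v\<in>V-K. f v = k} + 1" if "k \<in> K" for k
    unfolding part_def using that finV by simp
  have fibc: "\<forall>k\<in>K. \<forall>k'\<in>K. card {v\<in>V-K. f v = k} = card {v\<in>V-K. f v = k'}"
    using both by (rule conjunct1)
  have adjWf: "\<forall>u\<in>V-K. \<forall>v\<in>V-K. u \<noteq> v \<longrightarrow> ({u,v} \<in> E \<longleftrightarrow> f u \<noteq> f v)"
    using both by (rule conjunct2)
  have eqc: "\<forall>A\<in>P. \<forall>B\<in>P. card A = card B"
  proof (intro ballI)
    fix A B assume "A \<in> P" "B \<in> P"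
    then obtain k k' where kk: "k \<in> K" "k' \<in> K" "A = part k" "B = part k'" unfolding P_def by blast
    have "card {v\<in>V-K. f v = k} = card {v\<in>V-K. f v = k'}" using fibc kk by blast
    thus "card A = card B" using cardpart[OF kk(1)] cardpart[OF kk(2)] kk by simp
  qed
  have sameP: "(\<exists>A\<in>P. u \<in> A \<and> v \<in> A) \<longleftrightarrow> g u = g v" if "u \<in> V" "v \<in> V" for u v
    using memP gK that unfolding P_def by blast
  have adj: "{u,v} \<in> E \<longleftrightarrow> (u \<noteq> v \<and> \<not> (\<exists>A\<in>P. u \<in> A \<and> v \<in> A))" if u: "u \<in> V" and v: "v \<in> V" for u v
  proof -
    have "{u,v} \<in> E \<longleftrightarrow> u \<noteq> v \<and> g u \<noteq> g v"
    proof (cases "u \<in> K")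
      case uK: True
      show ?thesis
      proof (cases "v \<in> K")
        case True thus ?thesis using uK adjK g_def by simp
      next
        case False
        hence vW: "v \<in> V - K" using v by blast
        have "{u,v} \<in> E \<longleftrightarrow> {v,u} \<in> E" by (simp add: insert_commute)
        also have "\<dots> \<longleftrightarrow> u \<noteq> f v" using fprop[OF vW] uK unfolding f_def by blast
        finally show ?thesis using uK False g_def by auto
      qed
    next
      case uK: False
      hence uW: "u \<in> V - K" using u by blast
      show ?thesis
      proof (cases "v \<in> K")
        case True
        have "{u,v} \<in> E \<longleftrightarrow> v \<noteq> f u" using fprop[OF uW] True unfolding f_def by blast
        thus ?thesis using uK True g_def by auto
      next
        case False
        hence vW: "v \<in> V - K" using v by blast
        show ?thesis
        proof (cases "u = v")
          case True thus ?thesis using sg_no_loop[OF sg] by simp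
        next
          case False
          have "{u,v} \<in> E \<longleftrightarrow> f u \<noteq> f v" using adjWf uW vW False by blast
          thus ?thesis using uK \<open>v \<notin> K\<close> False unfolding g_def by simp
        qed
      qed
    qed
    thus ?thesis using sameP[OF u v] by blast
  qed
  have adj': "\<forall>u\<in>V. \<forall>v\<in>V. {u,v} \<in> E \<longleftrightarrow> (u \<noteq> v \<and> \<not> (\<exists>A\<in>P. u \<in> A \<and> v \<in> A))"
    using adj by blast
  have c2: "card P \<ge> 2" using cardP r2 by simp
  show ?thesis unfolding balanced_complete_multipartite_def
    by (rule exI[of _ P]) (intro conjI; fact)
qed

lemma sum_eq_bound:
  fixes f :: "'b \<Rightarrow> real"
  assumes "finite A" "\<forall>x\<in>A. f x \<le> g x" "(\<Sum>x\<in>A. f x) = (\<Sum>x\<in>A. g x)" "x \<in> A"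
  shows "f x = g x"
proof -
  have "(\<Sum>x\<in>A. g x - f x) = 0" using assms(3) by (simp add: sum_subtractf)
  hence "\<forall>x\<in>A. g x - f x = 0" using assms(1,2) by (subst sum_nonneg_eq_0_iff[symmetric]) auto
  thus ?thesis using assms(4) by simp
qed

lemma main_step:
  fixes V :: "'a set"
  assumes sg: "simple_graph V E" and ne: "V \<noteq> {}"
    and IH: "\<And>(V'::'a set) E'. simple_graph V' E' \<Longrightarrow> card V' < card V \<Longrightarrow>
       S V' E' \<le> real (card V')^2/2 \<and> (S V' E' = real (card V')^2/2 \<and> V' \<noteq> {} \<longrightarrow> balanced_complete_multipartite V' E')"
  shows "S V E \<le> real (card V)^2/2 \<and> (S V E = real (card V)^2/2 \<longrightarrow> balanced_complete_multipartite V E)"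
proof -
  have finV: "finite V" using sg_finite[OF sg] .
  have finE: "finite E" using sg_finE[OF sg] .
  obtain K where Kc: "is_clique V E K" and Kmax: "\<forall>K'. is_clique V E K' \<longrightarrow> card K' \<le> card K"
    using max_clique_ex[OF sg] by blast
  have KV: "K \<subseteq> V" using clique_sub[OF Kc] .
  have finK: "finite K" using finV KV finite_subset by blast
  obtain v0 where "v0 \<in> V" using ne by blast
  hence "is_clique V E {v0}" by (simp add: is_clique_def)
  hence r1: "card K \<ge> 1" using Kmax by fastforce
  define r where "r = card K"
  define W where "W = V - K"
  define E' where "E' = ind E W"
  define N where "N = (\<lambda>v. {k\<in>K. {v,k}\<in>E})"
  define EK where "EK = {e\<in>E. e \<subseteq> K}"
  define EXX where "EXX = {e\<in>E. \<not> e \<subseteq> K \<and> \<not> e \<subseteq> W}"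
  have finW: "finite W" using finV W_def by simp
  have cardV: "card V = r + card W" unfolding r_def W_def using finV KV
    by (metis card_Diff_subset finK le_add_diff_inverse card_mono)
  have cW: "card W < card V" using cardV r1 r_def by simp
  have WV: "W \<subseteq> V" using W_def by blast
  have sg': "simple_graph W E'" using sg_ind[OF sg WV] E'_def by simp
  have IHW: "S W E' \<le> real (card W)^2/2 \<and> (S W E' = real (card W)^2/2 \<and> W \<noteq> {} \<longrightarrow> balanced_complete_multipartite W E')"
    by (rule IH[of W E', OF sg' cW])
  have Eun: "E = EK \<union> EXX \<union> E'" unfolding EK_def EXX_def E'_def ind_def by auto
  have fins: "finite EK" "finite EXX" "finite E'" using finE Eun by auto
  have d1: "EK \<inter> EXX = {}" unfolding EK_def EXX_def by blast
  have nee: "\<forall>e\<in>E. e \<noteq> {}" using sg unfolding simple_graph_def by force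
  have d2: "(EK \<union> EXX) \<inter> E' = {}" unfolding EK_def EXX_def E'_def ind_def W_def using nee by blast
  have sumE: "S V E = (\<Sum>e\<in>EK. w V E e) + (\<Sum>e\<in>EXX. w V E e) + (\<Sum>e\<in>E'. w V E e)"
  proof -
    have "S V E = sum (w V E) (EK \<union> EXX \<union> E')" unfolding S_def by (rule sum.cong[OF Eun]) simp
    also have "\<dots> = sum (w V E) (EK \<union> EXX) + sum (w V E) E'"
      by (rule sum.union_disjoint) (use fins d2 in auto)
    also have "sum (w V E) (EK \<union> EXX) = sum (w V E) EK + sum (w V E) EXX"
      by (rule sum.union_disjoint) (use fins d1 in auto)
    finally show ?thesis by simp
  qed
  have hK: "(\<Sum>e\<in>EK. w V E e) = (if r \<ge> 2 then real r^2/2 else 0)"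
    using partK[OF sg Kc Kmax] EK_def r_def by simp
  have EXXim: "EXX = (\<lambda>(v,k). {v,k}) ` (SIGMA v:W. N v)"
  proof
    show "EXX \<subseteq> (\<lambda>(v,k). {v,k}) ` (SIGMA v:W. N v)"
    proof
      fix e assume e: "e \<in> EXX"
      then obtain a b where ab: "a \<noteq> b" "e = {a,b}" "a \<in> V" "b \<in> V"
        using sg_edge[OF sg] EXX_def by blast
      show "e \<in> (\<lambda>(v,k). {v,k}) ` (SIGMA v:W. N v)"
      proof (cases "a \<in> K")
        case True
        hence "b \<in> W" using e ab EXX_def W_def by auto
        hence "(b,a) \<in> (SIGMA v:W. N v)" using True e ab EXX_def N_def by (auto simp: insert_commute)
        thus ?thesis using ab by (auto simp: insert_commute image_iff)
      next
        case False
        hence aW: "a \<in> W" using ab W_def by auto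
        hence "b \<in> K" using e ab EXX_def W_def by auto
        hence "(a,b) \<in> (SIGMA v:W. N v)" using aW e ab EXX_def N_def by auto
        thus ?thesis using ab by (auto simp: image_iff)
      qed
    qed
    show "(\<lambda>(v,k). {v,k}) ` (SIGMA v:W. N v) \<subseteq> EXX"
      unfolding EXX_def N_def W_def by auto
  qed
  have injX: "inj_on (\<lambda>(v,k). {v,k}) (SIGMA v:W. N v)"
    unfolding inj_on_def N_def W_def by (auto simp: doubleton_eq_iff)
  have finN: "\<forall>v\<in>W. finite (N v)" using finK N_def by simp
  have hX: "(\<Sum>e\<in>EXX. w V E e) = (\<Sum>v\<in>W. \<Sum>k\<in>N v. w V E {v,k})"
  proof -
    have "(\<Sum>e\<in>EXX. w V E e) = (\<Sum>p\<in>Sigma W N. w V E ((\<lambda>(v,k). {v,k}) p))"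
      unfolding EXXim by (simp add: sum.reindex[OF injX])
    also have "\<dots> = (\<Sum>(v,k)\<in>Sigma W N. w V E {v,k})" by (simp add: case_prod_unfold)
    also have "\<dots> = (\<Sum>v\<in>W. \<Sum>k\<in>N v. w V E {v,k})"
      using sum.Sigma[OF finW finN, of "\<lambda>v k. w V E {v,k}"] by simp
    finally show ?thesis .
  qed
  have perv: "(\<Sum>k\<in>N v. w V E {v,k}) \<le> r \<and> ((\<Sum>k\<in>N v. w V E {v,k}) = r \<longrightarrow> card (N v) = r - 1)"
    if "v \<in> W" for v
    using vertex_bound[OF sg Kc Kmax _ _ r1, of v] that W_def N_def r_def by auto
  have hXle: "(\<Sum>e\<in>EXX. w V E e) \<le> real (card W) * r"
    unfolding hX using perv sum_mono[of W "\<lambda>v. (\<Sum>k\<in>N v. w V E {v,k})" "\<lambda>_. real r"] by simp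
  have termW: "w V E e \<le> w W E' e" if "e \<in> E'" for e
  proof -
    have "2 \<le> edge_clique_num W E' e" using ecn_ge2[OF sg' that] .
    moreover have "edge_clique_num W E' e \<le> edge_clique_num V E e"
      using ecn_ind[OF sg WV] that E'_def by simp
    ultimately show ?thesis unfolding w_def by (intro frac_mono) auto
  qed
  have hWle: "(\<Sum>e\<in>E'. w V E e) \<le> S W E'"
    unfolding S_def using termW by (intro sum_mono) auto
  have KB: "(\<Sum>e\<in>EK. w V E e) \<le> real r^2/2" using hK by simp
  have alg: "real (card V)^2/2 = real r^2/2 + real (card W) * r + real (card W)^2/2"
    using cardV by (simp add: power2_eq_square algebra_simps)
  have ineq: "S V E \<le> real (card V)^2/2"
    using sumE KB hXle hWle IHW alg by linarith
  moreover have "balanced_complete_multipartite V E" if eq: "S V E = real (card V)^2/2"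
  proof -
    have eK: "(\<Sum>e\<in>EK. w V E e) = real r^2/2" and eX: "(\<Sum>e\<in>EXX. w V E e) = real (card W) * r"
      and eW1: "(\<Sum>e\<in>E'. w V E e) = S W E'" and eW2: "S W E' = real (card W)^2/2"
      using sumE KB hXle hWle IHW alg eq by linarith+
    have r2: "r \<ge> 2" using eK hK r1 r_def by (auto split: if_splits)
    have dv: "\<forall>v\<in>V-K. card {k\<in>K. {v,k}\<in>E} = card K - 1"
    proof
      fix v assume v: "v \<in> V - K"
      have "(\<Sum>v\<in>W. \<Sum>k\<in>N v. w V E {v,k}) = (\<Sum>v\<in>W. real r)" using eX hX by simp
      hence "(\<Sum>k\<in>N v. w V E {v,k}) = r"
        using sum_eq_bound[OF finW, of "\<lambda>v. (\<Sum>k\<in>N v. w V E {v,k})" "\<lambda>_. real r" v] perv v W_def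
        by auto
      thus "card {k\<in>K. {v,k}\<in>E} = card K - 1" using perv[of v] v W_def N_def r_def by auto
    qed
    have ceq: "\<forall>e\<in>ind E (V-K). edge_clique_num V E e = edge_clique_num (V-K) (ind E (V-K)) e"
    proof
      fix e assume e: "e \<in> ind E (V-K)"
      hence e': "e \<in> E'" using E'_def W_def by simp
      have "w V E e = w W E' e"
        using sum_eq_bound[OF fins(3), of "w V E" "w W E'" e] termW eW1 e' S_def by auto
      moreover have "2 \<le> edge_clique_num W E' e" using ecn_ge2[OF sg' e'] .
      moreover have "2 \<le> edge_clique_num V E e" using ecn_ind[OF sg WV, of e] e' E'_def calculation(2) by simp
      ultimately have "edge_clique_num W E' e = edge_clique_num V E e"
        unfolding w_def using frac_inj[of "real (edge_clique_num W E' e)" "real (edge_clique_num V E e)"] by simp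
      thus "edge_clique_num V E e = edge_clique_num (V-K) (ind E (V-K)) e" using W_def E'_def by simp
    qed
    have bal: "V - K \<noteq> {} \<longrightarrow> balanced_complete_multipartite (V-K) (ind E (V-K))"
      using IHW eW2 W_def E'_def by simp
    have cK2: "card K \<ge> 2" using r2 r_def by simp
    show ?thesis by (rule struct_lemma[OF sg Kc Kmax cK2 dv ceq bal])
  qed
  ultimately show ?thesis by blast
qed


lemma main_lemma: "simple_graph V E \<Longrightarrow>
   S V E \<le> real (card V)^2/2 \<and> (S V E = real (card V)^2/2 \<and> V \<noteq> {} \<longrightarrow> balanced_complete_multipartite V E)"
proof (induction "card V" arbitrary: V E rule: less_induct)
  case less
  show ?case
  proof (cases "V = {}")
    case True
    hence "E = {}" using less.prems unfolding simple_graph_def by fastforce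
    thus ?thesis using True by (simp add: S_def)
  next
    case False
    have "S V E \<le> real (card V)^2/2 \<and> (S V E = real (card V)^2/2 \<longrightarrow> balanced_complete_multipartite V E)"
      by (rule main_step[OF less.prems False]) (use less.hyps in blast)
    thus ?thesis by blast
  qed
qed

lemma transv:
  assumes P: "partition_on W P" and fin: "finite P" and h: "\<forall>B\<in>P. h B \<in> B"
  shows "card (h ` P) = card P \<and> (\<forall>x\<in>h`P. \<forall>y\<in>h`P. x \<noteq> y \<longrightarrow> \<not> (\<exists>C\<in>P. x \<in> C \<and> y \<in> C)) \<and> h ` P \<subseteq> W"
proof (intro conjI)
  have "inj_on h P" by (rule inj_onI) (metis h part_uniq[OF P])
  thus "card (h ` P) = card P" by (simp add: card_image)
  show "\<forall>x\<in>h`P. \<forall>y\<in>h`P. x \<noteq> y \<longrightarrow> \<not> (\<exists>C\<in>P. x \<in> C \<and> y \<in> C)"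
    using h part_uniq[OF P] by (smt (verit, best) imageE)
  show "h ` P \<subseteq> W" using h part_sub[OF P] by blast
qed

lemma clique_parts:
  assumes P: "partition_on V P" and fin: "finite P"
    and adj: "\<forall>u\<in>V. \<forall>v\<in>V. {u,v} \<in> E \<longrightarrow> \<not> (\<exists>A\<in>P. u \<in> A \<and> v \<in> A)"
    and C: "is_clique V E C"
  shows "card C \<le> card P"
proof -
  define p where "p = (\<lambda>y. SOME B. B \<in> P \<and> y \<in> B)"
  have CV: "C \<subseteq> V" using clique_sub[OF C] .
  have pp: "p y \<in> P \<and> y \<in> p y" if "y \<in> C" for y
    unfolding p_def using part_ex[OF P] CV that by (metis (no_types, lifting) someI_ex subsetD)
  have "inj_on p C"
  proof (rule inj_onI)
    fix x y assume x: "x \<in> C" and y: "y \<in> C" and e: "p x = p y"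
    show "x = y"
    proof (rule ccontr)
      assume "x \<noteq> y"
      hence "{x,y} \<in> E" using clique_adj[OF C x y] by blast
      hence "\<not> (\<exists>A\<in>P. x \<in> A \<and> y \<in> A)" using adj CV x y by blast
      thus False using pp[OF x] pp[OF y] e by metis
    qed
  qed
  moreover have "p ` C \<subseteq> P" using pp by blast
  ultimately show ?thesis using card_inj_on_le fin by blast
qed

lemma double_count:
  assumes fin: "finite V" "finite E" and sub: "\<forall>e\<in>E. e \<subseteq> V"
  shows "(\<Sum>e\<in>E. card e) = (\<Sum>u\<in>V. card {e\<in>E. u \<in> e})"
proof -
  have "(\<Sum>e\<in>E. card e) = (\<Sum>e\<in>E. \<Sum>u\<in>V. if u \<in> e then 1 else 0)"
  proof (rule sum.cong)
    fix e assume "e \<in> E"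
    hence "V \<inter> {u. u \<in> e} = e" using sub by blast
    thus "card e = (\<Sum>u\<in>V. if u \<in> e then 1 else 0)" using fin by (simp add: sum.If_cases)
  qed simp
  also have "\<dots> = (\<Sum>u\<in>V. \<Sum>e\<in>E. if u \<in> e then 1 else 0)" by (rule sum.swap)
  also have "\<dots> = (\<Sum>u\<in>V. card {e\<in>E. u \<in> e})"
  proof (rule sum.cong)
    fix u assume "u \<in> V"
    have "E \<inter> {e. u \<in> e} = {e\<in>E. u \<in> e}" by blast
    thus "(\<Sum>e\<in>E. if u \<in> e then 1 else 0) = card {e\<in>E. u \<in> e}" using fin by (simp add: sum.If_cases)
  qed simp
  finally show ?thesis .
qed

lemma converse:
  assumes sg: "simple_graph V E" and bal: "balanced_complete_multipartite V E"
  shows "S V E = real (card V)^2/2"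
proof -
  obtain P where P: "partition_on V P" and k2: "card P \<ge> 2" and eqc: "\<forall>A\<in>P. \<forall>B\<in>P. card A = card B"
    and adj: "\<forall>u\<in>V. \<forall>v\<in>V. {u,v} \<in> E \<longleftrightarrow> (u \<noteq> v \<and> \<not> (\<exists>A\<in>P. u \<in> A \<and> v \<in> A))"
    using bal unfolding balanced_complete_multipartite_def by blast
  have finV: "finite V" using sg_finite[OF sg] .
  have finE: "finite E" using sg_finE[OF sg] .
  have finP: "finite P"
  proof -
    have "P \<subseteq> Pow V" using part_sub[OF P] by blast
    thus ?thesis using finV finite_subset by blast
  qed
  define k where "k = card P"
  obtain A0 where A0: "A0 \<in> P" using k2 by fastforce
  define s where "s = card A0"
  have cs: "card A = s" if "A \<in> P" for A using eqc A0 that s_def by blast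
  have cardV: "card V = k * s"
  proof -
    have "card V = card (\<Union>P)" using partition_onD1[OF P] by simp
    also have "\<dots> = (\<Sum>A\<in>P. card A)"
      using card_Union_disjoint[OF partition_onD2[OF P]] finP part_sub[OF P] finV finite_subset by blast
    also have "\<dots> = k * s" using cs k_def by simp
    finally show ?thesis .
  qed
  have ce: "edge_clique_num V E e = k" if e: "e \<in> E" for e
  proof -
    obtain u v where uv: "u \<noteq> v" "e = {u,v}" "u \<in> V" "v \<in> V" using sg_edge[OF sg e] by blast
    have np: "\<not> (\<exists>A\<in>P. u \<in> A \<and> v \<in> A)" using adj uv e by blast
    obtain Au where Au: "Au \<in> P" "u \<in> Au" using part_ex[OF P uv(3)] by blast
    obtain Av where Av: "Av \<in> P" "v \<in> Av" using part_ex[OF P uv(4)] by blast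
    have AuAv: "Au \<noteq> Av" using np Au Av by blast
    define h where "h = (\<lambda>B. if B = Au then u else if B = Av then v else repr B)"
    have h: "\<forall>B\<in>P. h B \<in> B" using Au Av repr_in[OF P] h_def by auto
    note T = transv[OF P finP h]
    have T1: "card (h ` P) = card P" using T by (rule conjunct1)
    have T2: "\<forall>x\<in>h`P. \<forall>y\<in>h`P. x \<noteq> y \<longrightarrow> \<not> (\<exists>C\<in>P. x \<in> C \<and> y \<in> C)"
      using T by blast
    have T3: "h ` P \<subseteq> V" using T by blast
    have Qcl: "is_clique V E (h ` P)"
      unfolding is_clique_def
    proof (intro conjI ballI impI)
      show "h ` P \<subseteq> V" using T3 .
      fix x y assume x: "x \<in> h ` P" and y: "y \<in> h ` P" and xy: "x \<noteq> y"
      have "\<not> (\<exists>C\<in>P. x \<in> C \<and> y \<in> C)" using T2 x y xy by blast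
      moreover have "x \<in> V" "y \<in> V" using x y T3 by auto
      ultimately show "{x,y} \<in> E" using adj xy by blast
    qed
    have hu: "h Au = u" by (simp add: h_def)
    have hv: "h Av = v" using AuAv by (simp add: h_def)
    have "u \<in> h ` P" using imageI[OF Au(1), of h] hu by simp
    moreover have "v \<in> h ` P" using imageI[OF Av(1), of h] hv by simp
    ultimately have eQ: "e \<subseteq> h ` P" using uv(2) by blast
    have "k \<le> edge_clique_num V E e" using ecn_ge[OF sg Qcl eQ] T1 k_def by linarith
    moreover have "edge_clique_num V E e \<le> k"
    proof -
      obtain C where C: "is_clique V E C" "card C = edge_clique_num V E e" using ecn_attained[OF sg e] by blast
      have adj2: "\<forall>u\<in>V. \<forall>v\<in>V. {u,v} \<in> E \<longrightarrow> \<not> (\<exists>A\<in>P. u \<in> A \<and> v \<in> A)" using adj by blast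
      show ?thesis using clique_parts[OF P finP adj2 C(1)] C(2) k_def by linarith
    qed
    ultimately show ?thesis by simp
  qed
  have deg: "card {e\<in>E. u \<in> e} = card V - s" if u: "u \<in> V" for u
  proof -
    obtain Au where Au: "Au \<in> P" "u \<in> Au" using part_ex[OF P u] by blast
    have AuV: "Au \<subseteq> V" using part_sub[OF P Au(1)] .
    have eq: "{e\<in>E. u \<in> e} = (\<lambda>v. {u,v}) ` (V - Au)"
    proof
      show "{e\<in>E. u \<in> e} \<subseteq> (\<lambda>v. {u,v}) ` (V - Au)"
      proof
        fix e assume e: "e \<in> {e\<in>E. u \<in> e}"
        then obtain a b where ab: "a \<noteq> b" "e = {a,b}" "a \<in> V" "b \<in> V" using sg_edge[OF sg] by blast
        then obtain v where v: "e = {u,v}" "v \<in> V" "v \<noteq> u" using e by (auto simp: insert_commute)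
        hence "\<not> (\<exists>A\<in>P. u \<in> A \<and> v \<in> A)" using adj e u by blast
        hence "v \<notin> Au" using Au by blast
        thus "e \<in> (\<lambda>v. {u,v}) ` (V - Au)" using v by blast
      qed
      show "(\<lambda>v. {u,v}) ` (V - Au) \<subseteq> {e\<in>E. u \<in> e}"
      proof
        fix e assume "e \<in> (\<lambda>v. {u,v}) ` (V - Au)"
        then obtain v where v: "v \<in> V - Au" "e = {u,v}" by blast
        have "\<not> (\<exists>A\<in>P. u \<in> A \<and> v \<in> A)" using part_uniq[OF P] Au v by blast
        moreover have "u \<noteq> v" using v Au by blast
        ultimately have "{u,v} \<in> E" using adj u v by blast
        thus "e \<in> {e\<in>E. u \<in> e}" using v by blast
      qed
    qed
    have "inj_on (\<lambda>v. {u,v}) (V - Au)" by (rule inj_onI) (auto simp: doubleton_eq_iff)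
    hence "card {e\<in>E. u \<in> e} = card (V - Au)" using eq card_image by metis
    also have "\<dots> = card V - s" using card_Diff_subset[OF _ AuV] finV finite_subset AuV cs Au by metis
    finally show ?thesis .
  qed
  have "(\<Sum>e\<in>E. card e) = (\<Sum>u\<in>V. card {e\<in>E. u \<in> e})"
    using double_count[OF finV finE] sg unfolding simple_graph_def by blast
  also have "\<dots> = card V * (card V - s)" using deg by simp
  finally have "2 * card E = card V * (card V - s)"
    using sg unfolding simple_graph_def by simp
  hence cE: "2 * card E = k * s * ((k - 1) * s)" using cardV by (simp add: diff_mult_distrib)
  have k1: "real k - 1 > 0" using k2 k_def by simp
  have km: "real (k-1) = real k - 1" using k2 k_def by (simp add: of_nat_diff)
  have "real (2 * card E) = real (k * s * ((k - 1) * s))" using cE by (rule arg_cong)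
  hence "2 * real (card E) = real k * real s * (real (k-1) * real s)" by simp
  hence "2 * real (card E) = real k * real s * ((real k - 1) * real s)" unfolding km .
  hence cE': "real (card E) = real k * real s * ((real k - 1) * real s) / 2" by simp
  have "S V E = (\<Sum>e\<in>E. real k / (real k - 1))" unfolding S_def w_def using ce by simp
  also have "\<dots> = real (card E) * (real k / (real k - 1))" by simp
  also have "\<dots> = (real k * real s)^2 / 2" using k1 unfolding cE' by (simp add: field_simps power2_eq_square)
  also have "\<dots> = real (card V)^2/2" using cardV by simp
  finally show ?thesis .
qed

theorem theorem1:
  fixes V :: "'a set" and E :: "'a set set"
  assumes "simple_graph V E" and "V \<noteq> {}"
  defines "c \<equiv> edge_clique_num V E"
  shows "(\<Sum>e\<in>E. real (c e) / (real (c e) - 1)) \<le> real (card V) ^ 2 / 2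
    \<and> ((\<Sum>e\<in>E. real (c e) / (real (c e) - 1)) = real (card V) ^ 2 / 2
           \<longleftrightarrow> balanced_complete_multipartite V E)"
proof -
  have eq: "(\<Sum>e\<in>E. real (c e) / (real (c e) - 1)) = S V E" unfolding S_def w_def c_def by simp
  show ?thesis unfolding eq using main_lemma[OF assms(1)] converse[OF assms(1)] assms(2) by blast
qed

end
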